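(* Let $f:\Gamma\to\Gamma$ be an irreducible, expanding graph map with stacks $\mathcal{K}_1,\dots,\mathcal{K}_p$ and final edges $\alpha_1,\dots,\alpha_p$. Then for every $i$ and every integer $d\ge0$, $$|f^{d+1}(\alpha_i)|\ge 1+\sum_{\mathcal{K}_j\in B_d(\mathcal{K}_i)}\omega(\mathcal{K}_j).$$
   Context: A graph $\Gamma$ is a finite 1-dimensional CW complex with a chosen orientation on each edge; $\mathcal{E}\Gamma$ is its set of edges, $\bar e$ is the reverse of $e$, $\iota,\tau$ the endpoints. An edge path is a nonempty concatenation $u=e_1\cdots e_k$ of oriented edges with $\tau(e_i)=\iota(e_{i+1})$; $|u|=k$ counts edges without cancelling backtracks; $u$ traverses $e$ if $e$ or $\bar e$ occurs in it. A graph map $f:\Gamma\to\Gamma$ assigns to vertices vertices and to each oriented edge $e$ an edge path $f(e)$ with $\iota(f(e))=f(\iota(e))$, $f(\bar e)=\overline{f(e)}$; powers are compositions, applied to paths by concatenation without tightening. $T(f)$ has $(i,j)$ entry the number of times $f(e_i)$ traverses $e_j$; $f$ is irreducible if $T(f)$ is irreducible and every vertex has valence $\ge3$; expanding if $|f^n(e)|\to\infty$ for every edge. Stacks: $e$ is mixing if $|f(e)|>1$; surplus if non-mixing and $f(e)\in\{f(u),\overline{f(u)}\}$ for some edge $u\notin\{e,\bar e\}$. Stacks are the classes of the equivalence relation on $\mathcal{E}\Gamma$ (unoriented edges) generated by $e\sim f(e)$ for $e$ non-mixing and non-surplus. Each stack has the form $\mathcal{K}=\{e,f(e),\dots,f^s(e)\}$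 with only $f^s(e)$ mixing or surplus; $f^s(e)$ is the final edge. $\alpha_i$ is the final edge of $\mathcal{K}_i$, and the weight is $\omega(\mathcal{K}_i)=|f(\alpha_i)|-1$. The stack graph $\mathcal{SG}(f)$ is the directed graph with vertices $\mathcal{K}_1,\dots,\mathcal{K}_p$ and a directed edge $[\mathcal{K}_i,\mathcal{K}_j]$ whenever $f(\alpha_i)$ contains an edge of $\mathcal{K}_j$; its length is $s([\mathcal{K}_i,\mathcal{K}_j])=\min\{s\ge1:f^s(\alpha_i)\text{ traverses }\alpha_j\}$, and a directed path $P=E_1\cdots E_k$ has length $s(P)=\sum s(E_i)$. The directed ball is $B_d(\mathcal{K}_i)=\{\mathcal{K}_j:\text{there is a directed path }P\text{ from }\mathcal{K}_i\text{ to }\mathcal{K}_j\text{ with }s(P)\le d\}$, where the empty path (length $0$) is allowed, so $B_0(\mathcal{K}_i)=\{\mathcal{K}_i\}$. *)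

theory Defs
  imports Main
begin

text \<open>
  A graph is given by a finite vertex set V, a finite set E of (unoriented) edges,
  each with a chosen positive orientation with initial vertex ini e and terminal
  vertex ter e.  An oriented edge is a pair (e, b): b = True is the chosen
  orientation, b = False its reverse.
\<close>

type_synonym 'e oedge = "'e \<times> bool"

definition flip :: "'e oedge \<Rightarrow> 'e oedge" where
  "flip x = (fst x, \<not> snd x)"

definition rev_path :: "'e oedge list \<Rightarrow> 'e oedge list" where
  "rev_path p = rev (map flip p)"

definition oinit :: "('e \<Rightarrow> 'v) \<Rightarrow> ('e \<Rightarrow> 'v) \<Rightarrow> 'e oedge \<Rightarrow> 'v" where
  "oinit ini ter x = (if snd x then ini (fst x) else ter (fst x))"

definition oterm :: "('e \<Rightarrow> 'v) \<Rightarrow> ('e \<Rightarrow> 'v) \<Rightarrow> 'e oedge \<Rightarrow> 'v" where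
  "oterm ini ter x = (if snd x then ter (fst x) else ini (fst x))"

definition is_edge_path :: "'e set \<Rightarrow> ('e \<Rightarrow> 'v) \<Rightarrow> ('e \<Rightarrow> 'v) \<Rightarrow> 'e oedge list \<Rightarrow> bool" where
  "is_edge_path E ini ter p \<longleftrightarrow> p \<noteq> [] \<and> fst ` set p \<subseteq> E \<and>
     (\<forall>k. Suc k < length p \<longrightarrow> oterm ini ter (p ! k) = oinit ini ter (p ! Suc k))"

text \<open>A graph map: vertex map fv, and fe e = f(e) for the positively oriented edge e;
  f(reverse e) is the reverse path.\<close>
definition graph_map :: "'v set \<Rightarrow> 'e set \<Rightarrow> ('e \<Rightarrow> 'v) \<Rightarrow> ('e \<Rightarrow> 'v) \<Rightarrow>
    ('v \<Rightarrow> 'v) \<Rightarrow> ('e \<Rightarrow> 'e oedge list) \<Rightarrow> bool" where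
  "graph_map V E ini ter fv fe \<longleftrightarrow> finite V \<and> finite E \<and>
     (\<forall>e\<in>E. ini e \<in> V \<and> ter e \<in> V) \<and> (\<forall>v\<in>V. fv v \<in> V) \<and>
     (\<forall>e\<in>E. is_edge_path E ini ter (fe e) \<and>
              oinit ini ter (hd (fe e)) = fv (ini e) \<and>
              oterm ini ter (last (fe e)) = fv (ter e))"

definition fo :: "('e \<Rightarrow> 'e oedge list) \<Rightarrow> 'e oedge \<Rightarrow> 'e oedge list" where
  "fo fe x = (if snd x then fe (fst x) else rev_path (fe (fst x)))"

text \<open>Image of a path: concatenation, no tightening.\<close>
definition fpath :: "('e \<Rightarrow> 'e oedge list) \<Rightarrow> 'e oedge list \<Rightarrow> 'e oedge list" where
  "fpath fe p = concat (map (fo fe) p)"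

definition fpow :: "('e \<Rightarrow> 'e oedge list) \<Rightarrow> nat \<Rightarrow> 'e \<Rightarrow> 'e oedge list" where
  "fpow fe n e = (fpath fe ^^ n) [(e, True)]"

definition traverses :: "'e oedge list \<Rightarrow> 'e \<Rightarrow> bool" where
  "traverses p e \<longleftrightarrow> e \<in> fst ` set p"

definition tmat :: "('e \<Rightarrow> 'e oedge list) \<Rightarrow> 'e \<Rightarrow> 'e \<Rightarrow> nat" where
  "tmat fe i j = length (filter (\<lambda>x. fst x = j) (fe i))"

fun mat_pow :: "'e set \<Rightarrow> ('e \<Rightarrow> 'e \<Rightarrow> nat) \<Rightarrow> nat \<Rightarrow> 'e \<Rightarrow> 'e \<Rightarrow> nat" where
  "mat_pow E T 0 i j = (if i = j then 1 else 0)"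
| "mat_pow E T (Suc n) i j = (\<Sum>k\<in>E. mat_pow E T n i k * T k j)"

definition irreducible_matrix :: "'e set \<Rightarrow> ('e \<Rightarrow> 'e \<Rightarrow> nat) \<Rightarrow> bool" where
  "irreducible_matrix E T \<longleftrightarrow> (\<forall>i\<in>E. \<forall>j\<in>E. \<exists>n>0. mat_pow E T n i j > 0)"

text \<open>Valence: number of oriented edges starting at v (loops counted twice).\<close>
definition valence :: "'e set \<Rightarrow> ('e \<Rightarrow> 'v) \<Rightarrow> ('e \<Rightarrow> 'v) \<Rightarrow> 'v \<Rightarrow> nat" where
  "valence E ini ter v = card {e\<in>E. ini e = v} + card {e\<in>E. ter e = v}"

definition irreducible_map :: "'v set \<Rightarrow> 'e set \<Rightarrow> ('e \<Rightarrow> 'v) \<Rightarrow> ('e \<Rightarrow> 'v) \<Rightarrow>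
    ('e \<Rightarrow> 'e oedge list) \<Rightarrow> bool" where
  "irreducible_map V E ini ter fe \<longleftrightarrow> irreducible_matrix E (tmat fe) \<and>
     (\<forall>v\<in>V. valence E ini ter v \<ge> 3)"

definition expanding :: "'e set \<Rightarrow> ('e \<Rightarrow> 'e oedge list) \<Rightarrow> bool" where
  "expanding E fe \<longleftrightarrow> (\<forall>e\<in>E. filterlim (\<lambda>n. length (fpow fe n e)) at_top at_top)"

definition mixing :: "('e \<Rightarrow> 'e oedge list) \<Rightarrow> 'e \<Rightarrow> bool" where
  "mixing fe e \<longleftrightarrow> length (fe e) > 1"

definition surplus :: "'e set \<Rightarrow> ('e \<Rightarrow> 'e oedge list) \<Rightarrow> 'e \<Rightarrow> bool" where
  "surplus E fe e \<longleftrightarrow> \<not> mixing fe e \<and>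
     (\<exists>u\<in>E. u \<noteq> e \<and> (fe e = fe u \<or> fe e = rev_path (fe u)))"

definition stack_gen :: "'e set \<Rightarrow> ('e \<Rightarrow> 'e oedge list) \<Rightarrow> 'e rel" where
  "stack_gen E fe = {(e, fst (hd (fe e))) | e. e \<in> E \<and> \<not> mixing fe e \<and> \<not> surplus E fe e}"

definition stack_rel :: "'e set \<Rightarrow> ('e \<Rightarrow> 'e oedge list) \<Rightarrow> 'e rel" where
  "stack_rel E fe = Id_on E \<union> (stack_gen E fe \<union> (stack_gen E fe)\<inverse>)\<^sup>+"

definition stacks :: "'e set \<Rightarrow> ('e \<Rightarrow> 'e oedge list) \<Rightarrow> 'e set set" where
  "stacks E fe = E // stack_rel E fe"

definition final_edge :: "'e set \<Rightarrow> ('e \<Rightarrow> 'e oedge list) \<Rightarrow> 'e set \<Rightarrow> 'e" where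
  "final_edge E fe K = (THE a. a \<in> K \<and> (mixing fe a \<or> surplus E fe a))"

definition weight :: "'e set \<Rightarrow> ('e \<Rightarrow> 'e oedge list) \<Rightarrow> 'e set \<Rightarrow> int" where
  "weight E fe K = int (length (fe (final_edge E fe K))) - 1"

definition sg_edge :: "'e set \<Rightarrow> ('e \<Rightarrow> 'e oedge list) \<Rightarrow> 'e set \<Rightarrow> 'e set \<Rightarrow> bool" where
  "sg_edge E fe K L \<longleftrightarrow> K \<in> stacks E fe \<and> L \<in> stacks E fe \<and>
     (\<exists>x\<in>L. traverses (fe (final_edge E fe K)) x)"

definition sg_len :: "'e set \<Rightarrow> ('e \<Rightarrow> 'e oedge list) \<Rightarrow> 'e set \<Rightarrow> 'e set \<Rightarrow> nat" where
  "sg_len E fe K L = (LEAST s. s \<ge> 1 \<and>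
     traverses (fpow fe s (final_edge E fe K)) (final_edge E fe L))"

definition sg_path :: "'e set \<Rightarrow> ('e \<Rightarrow> 'e oedge list) \<Rightarrow> 'e set list \<Rightarrow> bool" where
  "sg_path E fe Ks \<longleftrightarrow> Ks \<noteq> [] \<and>
     (\<forall>k. Suc k < length Ks \<longrightarrow> sg_edge E fe (Ks ! k) (Ks ! Suc k))"

definition sg_path_len :: "'e set \<Rightarrow> ('e \<Rightarrow> 'e oedge list) \<Rightarrow> 'e set list \<Rightarrow> nat" where
  "sg_path_len E fe Ks = (\<Sum>k<length Ks - 1. sg_len E fe (Ks ! k) (Ks ! Suc k))"

definition dball :: "'e set \<Rightarrow> ('e \<Rightarrow> 'e oedge list) \<Rightarrow> nat \<Rightarrow> 'e set \<Rightarrow> 'e set set" where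
  "dball E fe d K = {L. \<exists>Ks. sg_path E fe Ks \<and> hd Ks = K \<and> last Ks = L \<and>
                              sg_path_len E fe Ks \<le> d}"

end

theory Submission
  imports Defs
begin

lemma gm_edge:
  assumes "graph_map V E ini ter fv fe" "e \<in> E"
  shows "fe e \<noteq> [] \<and> fst ` set (fe e) \<subseteq> E"
  using assms by (auto simp: graph_map_def is_edge_path_def)

lemma fpath_append: "fpath fe (p @ q) = fpath fe p @ fpath fe q"
  by (simp add: fpath_def)

lemma fpath_concat: "fpath fe (concat xs) = concat (map (fpath fe) xs)"
  by (induction xs) (auto simp: fpath_append, simp add: fpath_def)

lemma funpow_fpath: "(fpath fe ^^ m) p = concat (map (\<lambda>x. (fpath fe ^^ m) [x]) p)"
proof (induction m arbitrary: p)
  case 0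
  then show ?case by (induction p) auto
next
  case (Suc m)
  have "(fpath fe ^^ Suc m) p = fpath fe ((fpath fe ^^ m) p)" by simp
  also have "\<dots> = fpath fe (concat (map (\<lambda>x. (fpath fe ^^ m) [x]) p))"
    by (simp only: Suc.IH[of p])
  also have "\<dots> = concat (map (fpath fe) (map (\<lambda>x. (fpath fe ^^ m) [x]) p))"
    by (rule fpath_concat)
  also have "\<dots> = concat (map (\<lambda>x. (fpath fe ^^ Suc m) [x]) p)" by (simp add: o_def)
  finally show ?case .
qed

lemma rev_path_append: "rev_path (p @ q) = rev_path q @ rev_path p"
  by (simp add: rev_path_def)

lemma rev_path_rev_path: "rev_path (rev_path p) = p"
  by (simp add: rev_path_def rev_map flip_def o_def)

lemma fo_flip: "fo fe (flip x) = rev_path (fo fe x)"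
  by (cases x) (auto simp: fo_def flip_def rev_path_rev_path)

lemma fpath_rev: "fpath fe (rev_path p) = rev_path (fpath fe p)"
proof (induction p)
  case Nil
  then show ?case by (simp add: fpath_def rev_path_def)
next
  case (Cons x p)
  have "rev_path (x # p) = rev_path p @ [flip x]" by (simp add: rev_path_def)
  then have "fpath fe (rev_path (x # p)) = rev_path (fpath fe p) @ rev_path (fo fe x)"
  proof -
    have "fpath fe [flip x] = rev_path (fo fe x)" by (simp add: fpath_def fo_flip)
    then show ?thesis using \<open>rev_path (x # p) = _\<close> by (simp add: fpath_append Cons)
  qed
  also have "\<dots> = rev_path (fpath fe (x # p))"
    by (simp add: fpath_def rev_path_append)
  finally show ?case .
qed

lemma funpow_rev: "(fpath fe ^^ m) (rev_path p) = rev_path ((fpath fe ^^ m) p)"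
  by (induction m) (auto simp: fpath_rev)

lemma fst_rev: "fst ` set (rev_path p) = fst ` set p"
  by (force simp: rev_path_def flip_def image_iff)

lemma trav_single:
  "traverses ((fpath fe ^^ m) [(y,b)]) c \<longleftrightarrow> traverses (fpow fe m y) c"
proof (cases b)
  case True
  then show ?thesis by (simp add: fpow_def)
next
  case False
  have "[(y,b)] = rev_path [(y,True)]" using False by (simp add: rev_path_def flip_def)
  then show ?thesis by (simp add: funpow_rev traverses_def fst_rev fpow_def)
qed

lemma trav_compose:
  assumes "traverses (fpow fe n a) b" "traverses (fpow fe m b) c"
  shows "traverses (fpow fe (m + n) a) c"
proof -
  have eq: "fpow fe (m + n) a = concat (map (\<lambda>x. (fpath fe ^^ m) [x]) (fpow fe n a))"
    by (simp add: fpow_def funpow_add funpow_fpath[where fe=fe and m=m and p="(fpath fe ^^ n) [(a, True)]"])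
  obtain bb where bb: "(b, bb) \<in> set (fpow fe n a)" using assms(1) by (auto simp: traverses_def)
  have "traverses ((fpath fe ^^ m) [(b,bb)]) c" using assms(2) trav_single by metis
  then obtain z where z: "z \<in> set ((fpath fe ^^ m) [(b,bb)])" "c = fst z" by (auto simp: traverses_def)
  have "z \<in> set (concat (map (\<lambda>x. (fpath fe ^^ m) [x]) (fpow fe n a)))"
    using z(1) bb by (auto simp: set_concat)
  then show ?thesis unfolding eq traverses_def using z(2) by blast
qed

lemma fpath_length: "length (fpath fe p) = sum_list (map (\<lambda>x. length (fe (fst x))) p)"
  by (induction p) (auto simp: fpath_def fo_def rev_path_def)

lemma fpath_E:
  assumes "graph_map V E ini ter fv fe" "fst ` set p \<subseteq> E"
  shows "fst ` set (fpath fe p) \<subseteq> E"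
proof
  fix y assume "y \<in> fst ` set (fpath fe p)"
  then obtain z where z: "z \<in> set (fpath fe p)" "y = fst z" by blast
  then obtain x where x: "x \<in> set p" "z \<in> set (fo fe x)" by (auto simp: fpath_def)
  have xE: "fst x \<in> E" using x(1) assms(2) by blast
  have "fst ` set (fo fe x) = fst ` set (fe (fst x))" by (simp add: fo_def fst_rev)
  moreover have "fst ` set (fe (fst x)) \<subseteq> E" using gm_edge[OF assms(1) xE] by blast
  ultimately show "y \<in> E" using x(2) z(2) by blast
qed

lemma fpow_E:
  assumes "graph_map V E ini ter fv fe" "a \<in> E"
  shows "fst ` set (fpow fe n a) \<subseteq> E"
  by (induction n) (auto simp: fpow_def assms(2) intro!: fpath_E[OF assms(1)])

lemma S_D: "(u,v) \<in> stack_gen E fe \<Longrightarrow>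
   u \<in> E \<and> \<not> mixing fe u \<and> \<not> surplus E fe u \<and> v = fst (hd (fe u))"
  by (auto simp: stack_gen_def)

lemma S_E:
  assumes "graph_map V E ini ter fv fe" "(u,v) \<in> stack_gen E fe"
  shows "v \<in> E"
proof -
  have d: "u \<in> E" "v = fst (hd (fe u))" using S_D[OF assms(2)] by auto
  have g: "fe u \<noteq> []" "fst ` set (fe u) \<subseteq> E" using gm_edge[OF assms(1) d(1)] by auto
  have "hd (fe u) \<in> set (fe u)" using g(1) by (rule hd_in_set)
  then show ?thesis using g(2) d(2) by blast
qed

lemma rt_E:
  assumes "graph_map V E ini ter fv fe" "x \<in> E" "(x,y) \<in> (stack_gen E fe)\<^sup>*"
  shows "y \<in> E"
  using assms(3)
proof (induction rule: rtrancl_induct)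
  case base
  then show ?case using assms(2) .
next
  case (step y z)
  then show ?case using S_E[OF assms(1)] by blast
qed

lemma nm_single:
  assumes "graph_map V E ini ter fv fe" "u \<in> E" "\<not> mixing fe u"
  shows "fe u = [hd (fe u)]"
proof -
  have "fe u \<noteq> []" using gm_edge[OF assms(1,2)] by blast
  moreover have "length (fe u) \<le> 1" using assms(3) by (simp add: mixing_def)
  ultimately show ?thesis by (cases "fe u") auto
qed

lemma fin_stop:
  assumes "(u,a) \<in> (stack_gen E fe)\<^sup>*" "mixing fe u \<or> surplus E fe u"
  shows "a = u"
  using assms(1)
proof (cases rule: converse_rtranclE)
  case base
  then show ?thesis by simp
next
  case (step w)
  then show ?thesis using S_D[OF step(1)] assms(2) by simp
qed

lemma S_step_iff:
  assumes "(u,v) \<in> stack_gen E fe" "mixing fe a \<or> surplus E fe a"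
  shows "(u,a) \<in> (stack_gen E fe)\<^sup>* \<longleftrightarrow> (v,a) \<in> (stack_gen E fe)\<^sup>*"
proof
  assume "(v,a) \<in> (stack_gen E fe)\<^sup>*"
  then show "(u,a) \<in> (stack_gen E fe)\<^sup>*" using assms(1) by (rule converse_rtrancl_into_rtrancl[rotated])
next
  have nd: "\<not> mixing fe u" "\<not> surplus E fe u" "v = fst (hd (fe u))" using S_D[OF assms(1)] by auto
  assume h: "(u,a) \<in> (stack_gen E fe)\<^sup>*"
  show "(v,a) \<in> (stack_gen E fe)\<^sup>*"
    using h
  proof (cases rule: converse_rtranclE)
    case base
    then show ?thesis using nd assms(2) by simp
  next
    case (step w)
    have "w = fst (hd (fe u))" using S_D[OF step(1)] by simp
    then show ?thesis using nd(3) step(2) by simp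
  qed
qed

lemma P_inv:
  assumes "(u,v) \<in> (stack_gen E fe \<union> (stack_gen E fe)\<inverse>)\<^sup>+" "mixing fe a \<or> surplus E fe a"
  shows "(u,a) \<in> (stack_gen E fe)\<^sup>* \<longleftrightarrow> (v,a) \<in> (stack_gen E fe)\<^sup>*"
  using assms(1)
proof (induction rule: trancl_induct)
  case (base y)
  then show ?case using S_step_iff[OF _ assms(2)] by blast
next
  case (step y z)
  then show ?case using S_step_iff[OF _ assms(2)] by blast
qed

lemma chain_single:
  assumes "graph_map V E ini ter fv fe" "(x,a) \<in> (stack_gen E fe)\<^sup>*"
  shows "\<exists>t b. fpow fe t x = [(a,b)]"
  using assms(2)
proof (induction rule: converse_rtrancl_induct)
  case base
  then show ?case by (rule exI[of _ 0]) (auto simp: fpow_def)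
next
  case (step y z)
  obtain t b where tb: "fpow fe t z = [(a,b)]" using step by blast
  have D: "y \<in> E" "\<not> mixing fe y" "z = fst (hd (fe y))" using S_D[OF step(1)] by auto
  define b' where "b' = snd (hd (fe y))"
  have fy: "fe y = [(z,b')]" using nm_single[OF assms(1) D(1,2)] D(3) b'_def by simp
  have "fpow fe (Suc t) y = (fpath fe ^^ t) [(z,b')]"
  proof -
    have "fpath fe [(y,True)] = [(z,b')]" by (simp add: fpath_def fo_def fy)
    then show ?thesis by (simp only: fpow_def funpow_Suc_right o_apply)
  qed
  show ?case
  proof (cases b')
    case True
    then have "fpow fe (Suc t) y = [(a,b)]" using \<open>fpow fe (Suc t) y = _\<close> tb by (simp add: fpow_def)
    then show ?thesis by blast
  next
    case False
    have "[(z,b')] = rev_path [(z,True)]" using False by (simp add: rev_path_def flip_def)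
    then have "fpow fe (Suc t) y = rev_path (fpow fe t z)"
      using \<open>fpow fe (Suc t) y = _\<close> by (simp add: funpow_rev fpow_def)
    then have "fpow fe (Suc t) y = [(a,\<not> b)]" using tb by (simp add: rev_path_def flip_def)
    then show ?thesis by blast
  qed
qed

lemma ex_final:
  assumes gm: "graph_map V E ini ter fv fe" and ex: "expanding E fe" and x: "x \<in> E"
  shows "\<exists>a. (x,a) \<in> (stack_gen E fe)\<^sup>* \<and> (mixing fe a \<or> surplus E fe a)"
proof (rule ccontr)
  assume nf: "\<not> ?thesis"
  have allsingle: "\<exists>y b. fpow fe n x = [(y,b)] \<and> (x,y) \<in> (stack_gen E fe)\<^sup>*" for n
  proof (induction n)
    case 0
    then show ?case by (auto simp: fpow_def)
  next
    case (Suc n)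
    then obtain y b where yb: "fpow fe n x = [(y,b)]" "(x,y) \<in> (stack_gen E fe)\<^sup>*" by blast
    have yE: "y \<in> E" by (rule rt_E[OF gm x yb(2)])
    have nfy: "\<not> mixing fe y" "\<not> surplus E fe y" using nf yb(2) by auto
    have Sy: "(y, fst (hd (fe y))) \<in> stack_gen E fe" using yE nfy by (auto simp: stack_gen_def)
    have fy: "fe y = [hd (fe y)]" using nm_single[OF gm yE nfy(1)] .
    have "fpow fe (Suc n) x = fpath fe (fpow fe n x)" by (simp only: fpow_def funpow.simps(2) o_apply)
    also have "\<dots> = fo fe (y,b)" by (simp add: yb fpath_def)
    also have "\<dots> = [if b then hd (fe y) else flip (hd (fe y))]"
    proof -
      obtain h where h: "fe y = [h]" using fy by blast
      show ?thesis by (simp add: h fo_def rev_path_def)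
    qed
    finally have "fpow fe (Suc n) x = [(fst (hd (fe y)), if b then snd (hd (fe y)) else \<not> snd (hd (fe y)))]"
      by (simp add: flip_def)
    moreover have "(x, fst (hd (fe y))) \<in> (stack_gen E fe)\<^sup>*" using yb(2) Sy by simp
    ultimately show ?case by blast
  qed
  have len1: "length (fpow fe n x) = 1" for n
  proof -
    obtain y b where "fpow fe n x = [(y,b)]" using allsingle[of n] by blast
    then show ?thesis by simp
  qed
  have "filterlim (\<lambda>n. length (fpow fe n x)) at_top at_top" using ex x by (simp add: expanding_def)
  then have "eventually (\<lambda>n. 2 \<le> length (fpow fe n x)) at_top" by (simp add: filterlim_at_top)
  then obtain N where "\<forall>n\<ge>N. 2 \<le> length (fpow fe n x)" by (auto simp: eventually_at_top_linorder)
  then show False using len1[of N] by auto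
qed

lemma stack_struct:
  assumes gm: "graph_map V E ini ter fv fe" and ex: "expanding E fe" and K: "K \<in> stacks E fe"
  shows "(mixing fe (final_edge E fe K) \<or> surplus E fe (final_edge E fe K)) \<and>
         final_edge E fe K \<in> K \<and> K = {y\<in>E. (y, final_edge E fe K) \<in> (stack_gen E fe)\<^sup>*}"
proof -
  let ?S = "stack_gen E fe"
  let ?T = "?S \<union> ?S\<inverse>"
  obtain x where x: "x \<in> E" "K = stack_rel E fe `` {x}"
    using K by (auto simp: stacks_def elim: quotientE)
  obtain a where a: "(x,a) \<in> ?S\<^sup>*" "mixing fe a \<or> surplus E fe a" using ex_final[OF gm ex x(1)] by blast
  have SE: "?S \<subseteq> E \<times> E"
  proof (rule subrelI)
    fix u v assume uv: "(u,v) \<in> ?S"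
    have "u \<in> E" using S_D[OF uv] by simp
    moreover have "v \<in> E" using S_E[OF gm uv] .
    ultimately show "(u,v) \<in> E \<times> E" by simp
  qed
  then have TE: "?T \<subseteq> E \<times> E" by blast
  have Kc: "K = {y\<in>E. (y,a) \<in> ?S\<^sup>*}"
  proof
    show "K \<subseteq> {y\<in>E. (y,a) \<in> ?S\<^sup>*}"
    proof
      fix y assume "y \<in> K"
      then have "(x,y) \<in> Id_on E \<union> ?T\<^sup>+" using x by (simp add: stack_rel_def)
      then show "y \<in> {y\<in>E. (y,a) \<in> ?S\<^sup>*}"
      proof
        assume "(x,y) \<in> Id_on E" then have "y = x" by (simp add: Id_on_def)
        then show ?thesis using a x by simp
      next
        assume h: "(x,y) \<in> ?T\<^sup>+"
        then have "y \<in> E" using trancl_subset_Sigma[OF TE] by blast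
        then show ?thesis using P_inv[OF h a(2)] a(1) by auto
      qed
    qed
  next
    show "{y\<in>E. (y,a) \<in> ?S\<^sup>*} \<subseteq> K"
    proof
      fix y assume y: "y \<in> {y\<in>E. (y,a) \<in> ?S\<^sup>*}"
      have "(x,a) \<in> ?T\<^sup>*" using a(1) rtrancl_mono[of ?S ?T] by blast
      moreover have "(a,y) \<in> ?T\<^sup>*"
      proof -
        have "(a,y) \<in> (?S\<inverse>)\<^sup>*" using y by (simp add: rtrancl_converseI)
        then show ?thesis using rtrancl_mono[of "?S\<inverse>" ?T] by blast
      qed
      ultimately have "(x,y) \<in> ?T\<^sup>*" by simp
      then have "x = y \<or> (x,y) \<in> ?T\<^sup>+" by (blast dest: rtranclD)
      then have "(x,y) \<in> stack_rel E fe"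
      proof
        assume "x = y" then show ?thesis using x(1) by (simp add: stack_rel_def Id_on_def)
      next
        assume "(x,y) \<in> ?T\<^sup>+" then show ?thesis by (simp add: stack_rel_def)
      qed
      then show "y \<in> K" using x by simp
    qed
  qed
  have aE: "a \<in> E" by (rule rt_E[OF gm x(1) a(1)])
  have aK: "a \<in> K" using Kc aE by simp
  have fe: "final_edge E fe K = a" unfolding final_edge_def
  proof (rule the_equality)
    show "a \<in> K \<and> (mixing fe a \<or> surplus E fe a)" using aK a by simp
  next
    fix a' assume "a' \<in> K \<and> (mixing fe a' \<or> surplus E fe a')"
    then have h: "a' \<in> K" "mixing fe a' \<or> surplus E fe a'" by simp_all
    have "(a',a) \<in> ?S\<^sup>*" using h(1) Kc by simp
    from fin_stop[OF this h(2)] show "a' = a" by simp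
  qed
  show ?thesis using fe a aK Kc by simp
qed

lemma stack_char:
  assumes "graph_map V E ini ter fv fe" "expanding E fe" "K \<in> stacks E fe"
  shows "K = {y\<in>E. (y, final_edge E fe K) \<in> (stack_gen E fe)\<^sup>*}"
  using stack_struct[OF assms] by (elim conjE)

lemma stack_fin:
  assumes "graph_map V E ini ter fv fe" "expanding E fe" "K \<in> stacks E fe"
  shows "final_edge E fe K \<in> K" "final_edge E fe K \<in> E"
proof -
  show a: "final_edge E fe K \<in> K" using stack_struct[OF assms] by (elim conjE)
  have "K \<subseteq> E" by (subst stack_char[OF assms]) blast
  then show "final_edge E fe K \<in> E" using a by blast
qed

lemma stack_mem:
  assumes "graph_map V E ini ter fv fe" "expanding E fe" "K \<in> stacks E fe" "x \<in> K"
  shows "(x, final_edge E fe K) \<in> (stack_gen E fe)\<^sup>*"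
proof -
  have "x \<in> {y\<in>E. (y, final_edge E fe K) \<in> (stack_gen E fe)\<^sup>*}"
    using assms(4) stack_char[OF assms(1-3)] by simp
  then show ?thesis by simp
qed

lemma stack_eq:
  assumes "graph_map V E ini ter fv fe" "expanding E fe" "K \<in> stacks E fe" "L \<in> stacks E fe"
    "final_edge E fe K = final_edge E fe L"
  shows "K = L"
proof -
  have "K = {y\<in>E. (y, final_edge E fe K) \<in> (stack_gen E fe)\<^sup>*}" by (rule stack_char[OF assms(1-3)])
  also have "\<dots> = {y\<in>E. (y, final_edge E fe L) \<in> (stack_gen E fe)\<^sup>*}" using assms(5) by simp
  also have "\<dots> = L" by (rule stack_char[OF assms(1,2,4), symmetric])
  finally show ?thesis .
qed

lemma sum_set_le_sum_list: "sum (f :: 'a \<Rightarrow> nat) (set xs) \<le> sum_list (map f xs)"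
  by (induction xs) (auto simp: sum.insert_if)

lemma sum_list_plus1:
  "(\<forall>x\<in>set q. f x = Suc (g x)) \<Longrightarrow> sum_list (map f q) = length q + sum_list (map (g :: 'a \<Rightarrow> nat) q)"
  by (induction q) auto

lemma ball_trav:
  assumes gm: "graph_map V E ini ter fv fe" and ex: "expanding E fe" and K: "K \<in> stacks E fe"
    and L: "L \<in> dball E fe d K"
  shows "L \<in> stacks E fe \<and> (\<exists>m\<le>d. traverses (fpow fe m (final_edge E fe K)) (final_edge E fe L))"
proof -
  obtain Ks where Ks: "sg_path E fe Ks" "hd Ks = K" "last Ks = L" "sg_path_len E fe Ks \<le> d"
    using L by (auto simp: dball_def)
  have ne: "Ks \<noteq> []" using Ks(1) by (simp add: sg_path_def)
  have main: "k < length Ks \<Longrightarrow> Ks!k \<in> stacks E fe \<and>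
     traverses (fpow fe (\<Sum>i<k. sg_len E fe (Ks!i) (Ks!Suc i)) (final_edge E fe K)) (final_edge E fe (Ks!k))" for k
  proof (induction k)
    case 0
    have "Ks!0 = K" using ne Ks(2) by (simp add: hd_conv_nth)
    then show ?case using K by (simp add: fpow_def traverses_def)
  next
    case (Suc k)
    then have IH: "traverses (fpow fe (\<Sum>i<k. sg_len E fe (Ks!i) (Ks!Suc i)) (final_edge E fe K)) (final_edge E fe (Ks!k))"
      by simp
    have e: "sg_edge E fe (Ks!k) (Ks!Suc k)" using Ks(1) Suc.prems by (simp add: sg_path_def)
    then obtain x where x: "x \<in> Ks!Suc k" "traverses (fe (final_edge E fe (Ks!k))) x"
      and st: "Ks!Suc k \<in> stacks E fe" by (auto simp: sg_edge_def)
    define \<beta> where "\<beta> = final_edge E fe (Ks!k)"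
    define \<gamma> where "\<gamma> = final_edge E fe (Ks!Suc k)"
    have "(x, \<gamma>) \<in> (stack_gen E fe)\<^sup>*" unfolding \<gamma>_def by (rule stack_mem[OF gm ex st x(1)])
    then obtain t b where "fpow fe t x = [(\<gamma>,b)]" using chain_single[OF gm] by blast
    then have t: "traverses (fpow fe t x) \<gamma>" by (simp add: traverses_def)
    have "fpow fe 1 \<beta> = fe \<beta>" by (simp add: fpow_def fpath_def fo_def)
    then have "traverses (fpow fe 1 \<beta>) x" using x(2) \<beta>_def by simp
    from trav_compose[OF this t] have "traverses (fpow fe (t+1) \<beta>) \<gamma>" .
    then have "\<exists>s. 1 \<le> s \<and> traverses (fpow fe s \<beta>) \<gamma>" by (intro exI[of _ "t+1"]) simp
    then have sl: "1 \<le> sg_len E fe (Ks!k) (Ks!Suc k) \<and>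
        traverses (fpow fe (sg_len E fe (Ks!k) (Ks!Suc k)) \<beta>) \<gamma>"
      unfolding sg_len_def \<beta>_def \<gamma>_def by (rule LeastI_ex)
    have IH': "traverses (fpow fe (\<Sum>i<k. sg_len E fe (Ks!i) (Ks!Suc i)) (final_edge E fe K)) \<beta>"
      using IH unfolding \<beta>_def .
    have sl2: "traverses (fpow fe (sg_len E fe (Ks!k) (Ks!Suc k)) \<beta>) \<gamma>" using sl by (rule conjunct2)
    have "traverses (fpow fe (sg_len E fe (Ks!k) (Ks!Suc k) + (\<Sum>i<k. sg_len E fe (Ks!i) (Ks!Suc i))) (final_edge E fe K)) \<gamma>"
      by (rule trav_compose[OF IH' sl2])
    moreover have "(\<Sum>i<Suc k. sg_len E fe (Ks!i) (Ks!Suc i)) = sg_len E fe (Ks!k) (Ks!Suc k) + (\<Sum>i<k. sg_len E fe (Ks!i) (Ks!Suc i))"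
      by simp
    ultimately show ?case using st unfolding \<gamma>_def by (simp add: ac_simps)
  qed
  have "length Ks - 1 < length Ks" using ne by simp
  from main[OF this] have m: "Ks ! (length Ks - 1) \<in> stacks E fe"
     "traverses (fpow fe (sg_path_len E fe Ks) (final_edge E fe K)) (final_edge E fe (Ks ! (length Ks - 1)))"
    by (simp_all add: sg_path_len_def)
  have "L = Ks ! (length Ks - 1)" using Ks(3) last_conv_nth[OF ne] by simp
  then show ?thesis using m Ks(4) by blast
qed

theorem lemma4p7:
  fixes V :: "'v set" and E :: "'e set" and ini ter :: "'e \<Rightarrow> 'v"
    and fv :: "'v \<Rightarrow> 'v" and fe :: "'e \<Rightarrow> ('e \<times> bool) list"
    and K :: "'e set" and d :: nat
  assumes "graph_map V E ini ter fv fe"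
    and "irreducible_map V E ini ter fe"
    and "expanding E fe"
    and "K \<in> stacks E fe"
  shows "int (length (fpow fe (d + 1) (final_edge E fe K)))
           \<ge> 1 + (\<Sum>L\<in>dball E fe d K. weight E fe L)"
proof -
  note gm = assms(1) and ex = assms(3) and K = assms(4)
  have finE: "finite E" using gm by (simp add: graph_map_def)
  define \<alpha> where "\<alpha> = final_edge E fe K"
  have \<alpha>E: "\<alpha> \<in> E" unfolding \<alpha>_def by (rule stack_fin(2)[OF gm ex K])
  have stE: "final_edge E fe L \<in> E" if "L \<in> stacks E fe" for L
    by (rule stack_fin(2)[OF gm ex that])
  define c where "c a = length (fe a) - 1" for a
  define U where "U n = {a. \<exists>m<n. traverses (fpow fe m \<alpha>) a}" for n
  have UE: "U n \<subseteq> E" for n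
  proof
    fix a assume "a \<in> U n"
    then obtain m where "traverses (fpow fe m \<alpha>) a" by (auto simp: U_def)
    then have "a \<in> fst ` set (fpow fe m \<alpha>)" by (simp add: traverses_def)
    then show "a \<in> E" using fpow_E[OF gm \<alpha>E, of m] by blast
  qed
  have finU: "finite (U n)" for n using UE finE finite_subset by blast
  have cnt: "1 + (\<Sum>a\<in>U n. c a) \<le> length (fpow fe n \<alpha>)" for n
  proof (induction n)
    case 0
    have "U 0 = {}" by (simp add: U_def)
    then show ?case by (simp add: fpow_def)
  next
    case (Suc n)
    let ?q = "fpow fe n \<alpha>"
    have Ueq: "U (Suc n) = U n \<union> fst ` set ?q"
      by (auto simp: U_def traverses_def less_Suc_eq)
    have fin2: "finite (fst ` set ?q)" by simp
    have "sum c (U (Suc n)) \<le> sum c (U n) + sum c (fst ` set ?q)"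
      unfolding Ueq using sum_Un_nat[OF finU[of n] fin2, of c] by linarith
    moreover have "sum c (fst ` set ?q) \<le> sum_list (map (\<lambda>x. c (fst x)) ?q)"
      using sum_set_le_sum_list[of c "map fst ?q"] by (simp add: o_def)
    moreover have "length (fpow fe (Suc n) \<alpha>) = sum_list (map (\<lambda>x. length (fe (fst x))) ?q)"
      by (simp add: fpow_def fpath_length)
    moreover have "sum_list (map (\<lambda>x. length (fe (fst x))) ?q) = length ?q + sum_list (map (\<lambda>x. c (fst x)) ?q)"
    proof (rule sum_list_plus1, rule ballI)
      fix x assume "x \<in> set ?q"
      then have "fst x \<in> E" using fpow_E[OF gm \<alpha>E] by auto
      then have "fe (fst x) \<noteq> []" using gm_edge[OF gm] by blast
      then show "length (fe (fst x)) = Suc (c (fst x))" by (simp add: c_def)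
    qed
    ultimately show ?case using Suc.IH by linarith
  qed
  have wt: "weight E fe L = int (c (final_edge E fe L))" if "L \<in> stacks E fe" for L
  proof -
    have "fe (final_edge E fe L) \<noteq> []" using gm_edge[OF gm stE[OF that]] by blast
    then obtain n where "length (fe (final_edge E fe L)) = Suc n" by (cases "fe (final_edge E fe L)") auto
    then show ?thesis by (simp add: weight_def c_def)
  qed
  have bst: "L \<in> stacks E fe" if "L \<in> dball E fe d K" for L
    using ball_trav[OF gm ex K that] by blast
  have inj: "inj_on (final_edge E fe) (dball E fe d K)"
  proof (rule inj_onI)
    fix L L' assume h: "L \<in> dball E fe d K" "L' \<in> dball E fe d K" "final_edge E fe L = final_edge E fe L'"
    show "L = L'"
      by (rule stack_eq[OF gm ex bst[OF h(1)] bst[OF h(2)] h(3)])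
  qed
  have sub: "final_edge E fe ` dball E fe d K \<subseteq> U (Suc d)"
  proof
    fix a assume "a \<in> final_edge E fe ` dball E fe d K"
    then obtain L where L: "L \<in> dball E fe d K" "a = final_edge E fe L" by blast
    obtain m where m: "m \<le> d" "traverses (fpow fe m \<alpha>) a"
      using ball_trav[OF gm ex K L(1)] L(2) \<alpha>_def by blast
    have "m < Suc d" using m(1) by simp
    then show "a \<in> U (Suc d)" unfolding U_def using m(2) by blast
  qed
  have "(\<Sum>L\<in>dball E fe d K. weight E fe L) = (\<Sum>L\<in>dball E fe d K. int (c (final_edge E fe L)))"
    by (rule sum.cong) (simp_all add: wt bst)
  also have "\<dots> = (\<Sum>a\<in>final_edge E fe ` dball E fe d K. int (c a))"
    by (simp add: sum.reindex[OF inj])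
  also have "\<dots> \<le> (\<Sum>a\<in>U (Suc d). int (c a))"
    by (rule sum_mono2[OF finU sub]) simp
  also have "\<dots> = int (\<Sum>a\<in>U (Suc d). c a)" by (rule of_nat_sum[symmetric])
  finally have A: "(\<Sum>L\<in>dball E fe d K. weight E fe L) \<le> int (\<Sum>a\<in>U (Suc d). c a)" .
  have B: "int (1 + (\<Sum>a\<in>U (Suc d). c a)) \<le> int (length (fpow fe (Suc d) \<alpha>))"
    using cnt[of "Suc d"] by (simp only: of_nat_le_iff)
  show ?thesis using A B unfolding \<alpha>_def by simp
qed

end
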